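(* Let $G=(V,E)$ be a finite simple undirected graph with $\{1,2\}\in E$; write $e_0=\{1,2\}$ and label the other edges $1,\dots,n$, $n=|E|-1$. Let $X\subseteq\mathbb R^n$ be the set of $(u_1,\dots,u_n)$ such that, setting $u_{e_0}:=0$, for every cycle $C$ of $G$ the minimum of $\{u_e:e\in C\}$ is attained at least twice. Let $w\in\mathbb R^n$ be tropically generic, i.e. its coordinates are linearly independent over $\mathbb Q$, and let $Y=\{w-u : u\in X\}$ (equivalently, the set of $u$ such that, with $w_{e_0}=u_{e_0}:=0$, for every cycle $C$ the minimum of $\{w_e-u_e: e\in C\}$ is attained at least twice). Then $X$ and $Y$ intersect transversally at each of their intersection points.
   Context: $X$ and $Y$ are regarded as rational polyhedral complexes (tropical varieties) in $\mathbb R^n$. Two such complexes $X,Y$ intersect transversally at a point $p\in X\cap Y$ if $p$ is contained in a face $\sigma$ of $X$ and a face $\tau$ of $Y$ such that the affine span of $\sigma\cup\tau$ is all of $\mathbb R^n$. *)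

theory Defs
  imports "HOL-Analysis.Analysis"
begin

definition simple_graph :: "'v set \<Rightarrow> 'v set set \<Rightarrow> bool" where
  "simple_graph V E \<longleftrightarrow> finite V \<and>
     (\<forall>e\<in>E. \<exists>a b. a \<noteq> b \<and> a \<in> V \<and> b \<in> V \<and> e = {a, b})"

definition is_cycle :: "'v set set \<Rightarrow> 'v set set \<Rightarrow> bool" where
  "is_cycle E C \<longleftrightarrow> (\<exists>vs. length vs \<ge> 3 \<and> distinct vs \<and>
     (\<forall>i<length vs. {vs ! i, vs ! ((i + 1) mod length vs)} \<in> E) \<and>
     C = {{vs ! i, vs ! ((i + 1) mod length vs)} | i. i < length vs})"

definition min_attained_twice :: "('e \<Rightarrow> real) \<Rightarrow> 'e set \<Rightarrow> bool" where
  "min_attained_twice f C \<longleftrightarrow>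
     (\<exists>e1\<in>C. \<exists>e2\<in>C. e1 \<noteq> e2 \<and> f e1 = Min (f ` C) \<and> f e2 = Min (f ` C))"

text \<open>Coordinates of u extended to all edges: u at edge e0 is 0, and edge lab i carries u $ i.\<close>
definition edge_val :: "('n \<Rightarrow> 'v set) \<Rightarrow> 'v set \<Rightarrow> real ^ 'n \<Rightarrow> 'v set \<Rightarrow> real" where
  "edge_val lab e0 u e = (if e = e0 then 0 else u $ (the_inv lab e))"

definition tropX :: "'v set set \<Rightarrow> 'v set \<Rightarrow> ('n \<Rightarrow> 'v set) \<Rightarrow> (real ^ 'n) set" where
  "tropX E e0 lab = {u. \<forall>C. is_cycle E C \<longrightarrow> min_attained_twice (edge_val lab e0 u) C}"

definition tropically_generic :: "real ^ 'n \<Rightarrow> bool" where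
  "tropically_generic w \<longleftrightarrow>
     (\<forall>q :: 'n \<Rightarrow> real. (\<forall>i. q i \<in> \<rat>) \<and> (\<Sum>i\<in>UNIV. q i * w $ i) = 0 \<longrightarrow> (\<forall>i. q i = 0))"

text \<open>Transversal intersection at p: p lies in a (polyhedral) face of X and one of Y whose union
  affinely spans the whole space.  Faces are rendered as polyhedra contained in the set.\<close>
definition transversal_at :: "('a::euclidean_space) set \<Rightarrow> 'a set \<Rightarrow> 'a \<Rightarrow> bool" where
  "transversal_at X Y p \<longleftrightarrow> (\<exists>\<sigma> \<tau>. polyhedron \<sigma> \<and> \<sigma> \<subseteq> X \<and> p \<in> \<sigma> \<and>
      polyhedron \<tau> \<and> \<tau> \<subseteq> Y \<and> p \<in> \<tau> \<and> affine hull (\<sigma> \<union> \<tau>) = UNIV)"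

end

theory Submission
  imports Defs
begin

lemma polyhedron_constraints:
  fixes a :: "'x \<Rightarrow> 'a::euclidean_space"
  assumes "finite F"
  shows "polyhedron {u. \<forall>x\<in>F. P x \<longrightarrow> a x \<bullet> u \<le> b x}"
proof -
  have "{u. \<forall>x\<in>F. P x \<longrightarrow> a x \<bullet> u \<le> b x} =
        \<Inter> ((\<lambda>x. if P x then {u. a x \<bullet> u \<le> b x} else UNIV) ` F)"
    by auto
  moreover have "polyhedron (\<Inter> ((\<lambda>x. if P x then {u. a x \<bullet> u \<le> b x} else UNIV) ` F))"
    using assms by (intro polyhedron_Inter) (auto simp: polyhedron_halfspace_le)
  ultimately show ?thesis by simp
qed

definition cvec :: "('n::finite \<Rightarrow> 'v set) \<Rightarrow> 'v set \<Rightarrow> 'v set \<Rightarrow> real ^ 'n" where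
  "cvec lab e0 e = (if e = e0 then 0 else axis (the_inv lab e) 1)"

lemma edge_val_inner: "edge_val lab e0 u e = cvec lab e0 e \<bullet> u"
  by (simp add: edge_val_def cvec_def inner_axis inner_commute)

lemma edge_val_add: "edge_val lab e0 (u + v) e = edge_val lab e0 u e + edge_val lab e0 v e"
  by (simp add: edge_val_inner inner_add_right)
lemma edge_val_diff: "edge_val lab e0 (u - v) e = edge_val lab e0 u e - edge_val lab e0 v e"
  by (simp add: edge_val_inner inner_diff_right)
lemma edge_val_scale: "edge_val lab e0 (c *\<^sub>R u) e = c * edge_val lab e0 u e"
  by (simp add: edge_val_inner)
lemma edge_val_zero: "edge_val lab e0 0 e = 0"
  by (simp add: edge_val_inner)

definition sig :: "'v set set \<Rightarrow> 'v set \<Rightarrow> ('n::finite \<Rightarrow> 'v set) \<Rightarrow> real ^ 'n \<Rightarrow> (real ^ 'n) set" where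
  "sig E e0 lab p = {u. \<forall>e\<in>E. \<forall>f\<in>E. edge_val lab e0 p e \<le> edge_val lab e0 p f \<longrightarrow>
        edge_val lab e0 u e \<le> edge_val lab e0 u f}"

lemma sig_polyhedron:
  assumes "finite E"
  shows "polyhedron (sig E e0 lab p)"
proof -
  have "sig E e0 lab p = {u. \<forall>x\<in>E\<times>E. edge_val lab e0 p (fst x) \<le> edge_val lab e0 p (snd x) \<longrightarrow>
      (cvec lab e0 (fst x) - cvec lab e0 (snd x)) \<bullet> u \<le> 0}"
    by (auto simp: sig_def edge_val_inner inner_diff_left)
  then show ?thesis using polyhedron_constraints[where F="E\<times>E" and
     P="\<lambda>x. edge_val lab e0 p (fst x) \<le> edge_val lab e0 p (snd x)" and
     a="\<lambda>x. cvec lab e0 (fst x) - cvec lab e0 (snd x)" and b="\<lambda>x. 0"] assms by simp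
qed

lemma ineq_aux: "(a::real^'n::finite) \<bullet> (w - v) \<le> b \<bullet> (w - v) \<longleftrightarrow> (b - a) \<bullet> v \<le> (b - a) \<bullet> w"
  by (simp add: inner_diff_left inner_diff_right) linarith

lemma tau_polyhedron:
  assumes "finite E"
  shows "polyhedron {v. w - v \<in> sig E e0 lab q}"
proof -
  have "{v. w - v \<in> sig E e0 lab q} = {u. \<forall>x\<in>E\<times>E. edge_val lab e0 q (fst x) \<le> edge_val lab e0 q (snd x) \<longrightarrow>
      (cvec lab e0 (snd x) - cvec lab e0 (fst x)) \<bullet> u \<le> (cvec lab e0 (snd x) - cvec lab e0 (fst x)) \<bullet> w}"
    by (simp add: sig_def edge_val_inner ineq_aux)
  then show ?thesis using polyhedron_constraints[where F="E\<times>E" and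
     P="\<lambda>x. edge_val lab e0 q (fst x) \<le> edge_val lab e0 q (snd x)" and
     a="\<lambda>x. cvec lab e0 (snd x) - cvec lab e0 (fst x)" and
     b="\<lambda>x. (cvec lab e0 (snd x) - cvec lab e0 (fst x)) \<bullet> w"] assms by simp
qed

lemma sig_refl: "p \<in> sig E e0 lab p"
  by (simp add: sig_def)

lemma sig_zero: "0 \<in> sig E e0 lab p"
  by (simp add: sig_def edge_val_zero)

lemma cycle_sub: "is_cycle E C \<Longrightarrow> C \<subseteq> E"
  unfolding is_cycle_def by auto

lemma sig_sub:
  assumes "finite E" "p \<in> tropX E e0 lab"
  shows "sig E e0 lab p \<subseteq> tropX E e0 lab"
proof
  fix u assume u: "u \<in> sig E e0 lab p"
  show "u \<in> tropX E e0 lab"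
    unfolding tropX_def
  proof (intro CollectI allI impI)
    fix C assume C: "is_cycle E C"
    have CE: "C \<subseteq> E" using cycle_sub[OF C] .
    have fC: "finite C" using CE assms(1) finite_subset by blast
    from assms(2) C obtain e1 e2 where e: "e1 \<in> C" "e2 \<in> C" "e1 \<noteq> e2"
      "edge_val lab e0 p e1 = Min (edge_val lab e0 p ` C)"
      "edge_val lab e0 p e2 = Min (edge_val lab e0 p ` C)"
      unfolding tropX_def min_attained_twice_def by blast
    have key: "edge_val lab e0 u e = Min (edge_val lab e0 u ` C)"
      if "e \<in> C" "edge_val lab e0 p e = Min (edge_val lab e0 p ` C)" for e
    proof (rule Min_eqI[symmetric])
      show "finite (edge_val lab e0 u ` C)" using fC by simp
      show "edge_val lab e0 u e \<in> edge_val lab e0 u ` C" using that by simp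
      fix y assume "y \<in> edge_val lab e0 u ` C"
      then obtain f where f: "f \<in> C" "y = edge_val lab e0 u f" by blast
      have "edge_val lab e0 p e \<le> edge_val lab e0 p f"
        using that f fC by simp
      then show "edge_val lab e0 u e \<le> y"
        using u f that CE unfolding sig_def by blast
    qed
    show "min_attained_twice (edge_val lab e0 u) C"
      unfolding min_attained_twice_def using e key by blast
  qed
qed

definition ind :: "real ^ 'n::finite \<Rightarrow> real \<Rightarrow> real ^ 'n" where
  "ind p c = (\<chi> i. if p $ i = c then 1 else 0)"

lemma edge_val_ind:
  assumes "c \<noteq> 0"
  shows "edge_val lab e0 (ind p c) e = (if edge_val lab e0 p e = c then 1 else 0)"
  using assms by (simp add: edge_val_def ind_def)

lemma perturb:
  assumes "finite E" "c \<noteq> 0"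
  shows "\<exists>\<epsilon>>0. p + \<epsilon> *\<^sub>R ind p c \<in> sig E e0 lab p"
proof -
  let ?v = "edge_val lab e0 p"
  define D where "D = {?v f - ?v e | e f. e \<in> E \<and> f \<in> E \<and> ?v e < ?v f}"
  have "D \<subseteq> (\<lambda>(e,f). ?v f - ?v e) ` (E \<times> E)" unfolding D_def by auto
  then have fD: "finite D" using assms(1) finite_subset by blast
  define \<delta> where "\<delta> = Min (insert 1 D)"
  have dpos: "\<delta> > 0" unfolding \<delta>_def using fD by (auto simp: D_def)
  have dle: "\<delta> \<le> ?v f - ?v e" if "e \<in> E" "f \<in> E" "?v e < ?v f" for e f
    unfolding \<delta>_def using fD that by (intro Min_le) (auto simp: D_def)
  define \<epsilon> where "\<epsilon> = \<delta> / 2"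
  have epos: "\<epsilon> > 0" using dpos by (simp add: \<epsilon>_def)
  have "p + \<epsilon> *\<^sub>R ind p c \<in> sig E e0 lab p"
    unfolding sig_def
  proof (intro CollectI ballI impI)
    fix e f assume ef: "e \<in> E" "f \<in> E" "?v e \<le> ?v f"
    show "edge_val lab e0 (p + \<epsilon> *\<^sub>R ind p c) e \<le> edge_val lab e0 (p + \<epsilon> *\<^sub>R ind p c) f"
    proof (cases "?v e = ?v f")
      case True then show ?thesis
        by (simp add: edge_val_add edge_val_scale edge_val_ind[OF assms(2)])
    next
      case False
      then have "?v e < ?v f" using ef by simp
      then have "\<delta> \<le> ?v f - ?v e" using dle ef by blast
      then show ?thesis using epos
        by (simp add: edge_val_add edge_val_scale edge_val_ind[OF assms(2)] \<epsilon>_def)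
    qed
  qed
  then show ?thesis using epos by blast
qed

lemma hamel:
  fixes t :: real assumes "t \<noteq> 0"
  shows "\<exists>\<phi>::real \<Rightarrow> rat. (\<forall>a b. \<phi> (a + b) = \<phi> a + \<phi> b) \<and> \<phi> t = 1"
proof -
  interpret p: vector_space_pair "(\<lambda>(r::rat) (x::real). of_rat r * x)" "(\<lambda>(r::rat) (x::rat). r * x)"
    by unfold_locales (auto simp: algebra_simps of_rat_add of_rat_mult)
  have ind: "p.vs1.independent {t}"
    using assms by (simp add: p.vs1.independent_insert p.vs1.span_empty)
  have lin: "Vector_Spaces.linear (\<lambda>(r::rat) (x::real). of_rat r * x) (\<lambda>(r::rat) (x::rat). r * x) (p.construct {t} (\<lambda>_. 1))"
    by (rule p.linear_construct[OF ind])
  have "p.construct {t} (\<lambda>_. 1) t = 1" by (rule p.construct_basis[OF ind]) simp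
  moreover have "\<forall>a b. p.construct {t} (\<lambda>_. 1) (a + b) = p.construct {t} (\<lambda>_. 1) a + p.construct {t} (\<lambda>_. 1) b"
    using lin by (simp add: Vector_Spaces.linear_iff)
  ultimately show ?thesis by blast
qed

lemma additive_sum:
  fixes \<phi> :: "real \<Rightarrow> rat"
  assumes add: "\<forall>a b. \<phi> (a + b) = \<phi> a + \<phi> b" and "finite A"
  shows "\<phi> (sum g A) = (\<Sum>i\<in>A. \<phi> (g i))"
  using assms(2)
proof (induction A rule: finite_induct)
  case empty
  have "\<phi> 0 = \<phi> 0 + \<phi> 0" using add by (metis add_0)
  then show ?case by simp
next
  case (insert x F) then show ?case using add by simp
qed

lemma group_zero:
  fixes x y :: "real ^ 'n::finite" and \<phi> :: "real \<Rightarrow> rat"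
  assumes add: "\<forall>a b. \<phi> (a + b) = \<phi> a + \<phi> b"
    and h: "\<And>c. c \<noteq> 0 \<Longrightarrow> (\<Sum>i\<in>{i. x$i = c}. y$i) = 0"
  shows "(\<Sum>i\<in>UNIV. of_rat (\<phi> (y$i)) * x$i) = 0"
proof -
  have "(\<Sum>i\<in>UNIV. of_rat (\<phi> (y$i)) * x$i) =
     (\<Sum>c\<in>(\<lambda>i. x$i) ` UNIV. \<Sum>i\<in>{i\<in>UNIV. x$i = c}. of_rat (\<phi> (y$i)) * x$i)"
    by (rule sum.image_gen) simp
  also have "\<dots> = 0"
  proof (rule sum.neutral, rule ballI)
    fix c assume "c \<in> (\<lambda>i. x$i) ` UNIV"
    have "(\<Sum>i\<in>{i\<in>UNIV. x$i = c}. of_rat (\<phi> (y$i)) * x$i) = (\<Sum>i\<in>{i. x$i = c}. of_rat (\<phi> (y$i)) * c)"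
      by (rule sum.cong) auto
    also have "\<dots> = c * of_rat (\<Sum>i\<in>{i. x$i = c}. \<phi> (y$i))"
      by (simp add: sum_distrib_left of_rat_sum mult.commute)
    also have "\<dots> = c * of_rat (\<phi> (\<Sum>i\<in>{i. x$i = c}. y$i))"
      using additive_sum[OF add, of "{i. x$i = c}" "\<lambda>i. y$i"] by simp
    also have "\<dots> = 0"
    proof (cases "c = 0")
      case False
      have "\<phi> 0 = 0" using additive_sum[OF add, of "{}"] by simp
      then show ?thesis using h[OF False] by simp
    qed simp
    finally show "(\<Sum>i\<in>{i\<in>UNIV. x$i = c}. of_rat (\<phi> (y$i)) * x$i) = 0" .
  qed
  finally show ?thesis .
qed

lemma inner_ind: "y \<bullet> ind x c = (\<Sum>i\<in>{i. x$i = c}. y$i)"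
proof -
  have "y \<bullet> ind x c = (\<Sum>i\<in>UNIV. if x$i = c then y$i else 0)"
    by (simp add: inner_vec_def ind_def if_distrib cong: if_cong)
  also have "\<dots> = (\<Sum>i\<in>{i\<in>UNIV. x$i = c}. y$i)"
    by (rule sum.inter_filter[symmetric]) simp
  finally show ?thesis by simp
qed

theorem lemma2p2:
  fixes V :: "nat set" and E :: "nat set set"
    and lab :: "'n::finite \<Rightarrow> nat set" and w :: "real ^ 'n"
  assumes "simple_graph V E"
    and "{1, 2} \<in> E"
    and "bij_betw lab UNIV (E - {{1, 2}})"
    and "tropically_generic w"
  shows "\<forall>p \<in> tropX E {1, 2} lab \<inter> (\<lambda>u. w - u) ` tropX E {1, 2} lab.
           transversal_at (tropX E {1, 2} lab) ((\<lambda>u. w - u) ` tropX E {1, 2} lab) p"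
proof
  let ?e0 = "{1, 2} :: nat set"
  let ?X = "tropX E ?e0 lab"
  have "E \<subseteq> insert ?e0 (range lab)" using assms(3) by (auto simp: bij_betw_def)
  moreover have "finite (insert ?e0 (range lab))" by simp
  ultimately have finE: "finite E" by (rule finite_subset)
  fix p assume p: "p \<in> ?X \<inter> (\<lambda>u. w - u) ` ?X"
  then have pX: "p \<in> ?X" by blast
  define q where "q = w - p"
  have qX: "q \<in> ?X" using p by (auto simp: q_def)
  have wpq: "w = p + q" by (simp add: q_def)
  define \<sigma> where "\<sigma> = sig E ?e0 lab p"
  define \<tau> where "\<tau> = {v. w - v \<in> sig E ?e0 lab q}"
  have s1: "polyhedron \<sigma>" unfolding \<sigma>_def by (rule sig_polyhedron[OF finE])
  have s2: "\<sigma> \<subseteq> ?X" unfolding \<sigma>_def by (rule sig_sub[OF finE pX])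
  have s3: "p \<in> \<sigma>" unfolding \<sigma>_def by (rule sig_refl)
  have t1: "polyhedron \<tau>" unfolding \<tau>_def by (rule tau_polyhedron[OF finE])
  have t2: "\<tau> \<subseteq> (\<lambda>u. w - u) ` ?X"
  proof
    fix v assume "v \<in> \<tau>"
    then have "w - v \<in> ?X" using sig_sub[OF finE qX] unfolding \<tau>_def by blast
    moreover have "v = w - (w - v)" by simp
    ultimately show "v \<in> (\<lambda>u. w - u) ` ?X" by blast
  qed
  have t3: "p \<in> \<tau>" unfolding \<tau>_def by (simp add: q_def[symmetric] sig_refl)
  have z: "0 \<in> \<sigma> \<union> \<tau>" unfolding \<sigma>_def by (simp add: sig_zero)
  have "span (\<sigma> \<union> \<tau>) = UNIV"
  proof (rule ccontr)
    assume ns: "span (\<sigma> \<union> \<tau>) \<noteq> UNIV"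
    have dlt: "dim (\<sigma> \<union> \<tau>) < DIM(real ^ 'n)"
      using ns dim_eq_full[of "\<sigma> \<union> \<tau>"] dim_subset_UNIV[of "\<sigma> \<union> \<tau>"] by linarith
    then obtain y :: "real ^ 'n" where y: "y \<noteq> 0" "\<forall>x\<in>span (\<sigma> \<union> \<tau>). orthogonal y x"
      using orthogonal_to_subspace_exists[OF dlt] by metis
    have hp: "(\<Sum>i\<in>{i. p$i = c}. y$i) = 0" if c: "c \<noteq> 0" for c
    proof -
      obtain \<epsilon> where e: "\<epsilon> > 0" "p + \<epsilon> *\<^sub>R ind p c \<in> sig E ?e0 lab p"
        using perturb[OF finE c] by blast
      have "ind p c = (1/\<epsilon>) *\<^sub>R ((p + \<epsilon> *\<^sub>R ind p c) - p)" using e(1) by simp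
      moreover have "(p + \<epsilon> *\<^sub>R ind p c) - p \<in> span (\<sigma> \<union> \<tau>)"
        using e s3 unfolding \<sigma>_def by (intro span_diff span_base) auto
      ultimately have "ind p c \<in> span (\<sigma> \<union> \<tau>)" by (metis span_mul)
      then have "y \<bullet> ind p c = 0" using y(2) by (simp add: orthogonal_def)
      then show ?thesis by (simp add: inner_ind)
    qed
    have hq: "(\<Sum>i\<in>{i. q$i = c}. y$i) = 0" if c: "c \<noteq> 0" for c
    proof -
      obtain \<epsilon> where e: "\<epsilon> > 0" "q + \<epsilon> *\<^sub>R ind q c \<in> sig E ?e0 lab q"
        using perturb[OF finE c] by blast
      have "ind q c = (1/\<epsilon>) *\<^sub>R (p - (w - (q + \<epsilon> *\<^sub>R ind q c)))" using e(1) wpq by simp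
      moreover have "p - (w - (q + \<epsilon> *\<^sub>R ind q c)) \<in> span (\<sigma> \<union> \<tau>)"
        using e t3 unfolding \<tau>_def by (intro span_diff span_base) auto
      ultimately have "ind q c \<in> span (\<sigma> \<union> \<tau>)" by (metis span_mul)
      then have "y \<bullet> ind q c = 0" using y(2) by (simp add: orthogonal_def)
      then show ?thesis by (simp add: inner_ind)
    qed
    obtain i0 where i0: "y $ i0 \<noteq> 0" using y(1) by (metis vec_eq_iff zero_index)
    obtain \<phi> :: "real \<Rightarrow> rat" where ph: "\<forall>a b. \<phi> (a + b) = \<phi> a + \<phi> b" "\<phi> (y $ i0) = 1"
      using hamel[OF i0] by blast
    have "(\<Sum>i\<in>UNIV. of_rat (\<phi> (y$i)) * p$i) = 0" by (rule group_zero[OF ph(1) hp])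
    moreover have "(\<Sum>i\<in>UNIV. of_rat (\<phi> (y$i)) * q$i) = 0" by (rule group_zero[OF ph(1) hq])
    ultimately have "(\<Sum>i\<in>UNIV. of_rat (\<phi> (y$i)) * w$i) = 0"
      by (simp add: wpq distrib_left sum.distrib)
    define zz where "zz = (\<lambda>i. (of_rat (\<phi> (y$i)) :: real))"
    have s0: "(\<Sum>i\<in>UNIV. zz i * w$i) = 0" unfolding zz_def by fact
    have r0: "\<forall>i. zz i \<in> \<rat>" unfolding zz_def by (simp add: Rats_of_rat)
    have "(\<forall>i. zz i \<in> \<rat>) \<and> (\<Sum>i\<in>UNIV. zz i * w $ i) = 0 \<longrightarrow> (\<forall>i. zz i = 0)"
      using assms(4) unfolding tropically_generic_def by blast
    then have "zz i0 = 0" using s0 r0 by blast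
    then have "(of_rat (\<phi> (y$i0)) :: real) = 0" unfolding zz_def .
    then show False using ph(2) by (metis of_rat_1 one_neq_zero)
  qed
  then have "affine hull (\<sigma> \<union> \<tau>) = UNIV"
    using affine_hull_span_0[OF hull_inc[OF z]] by simp
  then show "transversal_at ?X ((\<lambda>u. w - u) ` ?X) p"
    unfolding transversal_at_def using s1 s2 s3 t1 t2 t3 by blast
qed

end
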